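(* Let $h:\mathbb{R}^d\to\mathbb{R}^d$ satisfy $\|h(w)-h(w')\|\le\kappa\|w-w'\|$ for all $w,w'$, for some $\kappa\in[0,1)$ and some norm $\|\cdot\|$, and let $w_*$ be its fixed point; set $g(w)=h(w)-w$. Let $\|\cdot\|_m$, $l_{cm}$, $u_{cm}$ be as in the context. Then for any iterate $w_{t_m}$ (indeed for any point $w_{t_m}\in\mathbb{R}^d$), $$\big\langle\nabla\|w_{t_m}-w_*\|_m^2,\;g(w_{t_m})\big\rangle\le-2\Big(1-\frac{u_{cm}}{l_{cm}}\kappa\Big)\|w_{t_m}-w_*\|_m^2.$$
   Context: Moreau envelope construction: fix a norm $\|\cdot\|_s$ on $\mathbb{R}^d$ such that $\frac12\|\cdot\|_s^2$ is $L$-smooth w.r.t. $\|\cdot\|_s$ (e.g. an $\ell_p$ norm with $p\ge2$), and a constant $\xi>0$. Define $M(w)=\inf_{u\in\mathbb{R}^d}\{\frac12\|u\|^2+\frac1{2\xi}\|w-u\|_s^2\}$. It is known that $M$ is differentiable ($\frac L\xi$-smooth w.r.t. $\|\cdot\|_s$) and that there is a norm $\|\cdot\|_m$ with $M(w)=\frac12\|w\|_m^2$; $\nabla\|w\|_m^2$ denotes the gradient of $w\mapsto\|w\|_m^2=2M(w)$. Let $l_{cs},u_{cs}>0$ satisfy $l_{cs}\|w\|_s\le\|w\|\le u_{cs}\|w\|_s$ for all $w$, and set $l_{cm}=\sqrt{1+\xi l_{cs}^2}$, $u_{cm}=\sqrt{1+\xi u_{cs}^2}$, so that $l_{cm}\|w\|_m\le\|w\|\le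 u_{cm}\|w\|_m$. $\langle\cdot,\cdot\rangle$ is the Euclidean inner product. *)

theory Defs
  imports "HOL-Analysis.Analysis"
begin

definition is_norm :: "('a::real_vector \<Rightarrow> real) \<Rightarrow> bool" where
  "is_norm nrm \<longleftrightarrow>
     (\<forall>x. 0 \<le> nrm x) \<and> (\<forall>x. nrm x = 0 \<longleftrightarrow> x = 0) \<and>
     (\<forall>c x. nrm (c *\<^sub>R x) = \<bar>c\<bar> * nrm x) \<and>
     (\<forall>x y. nrm (x + y) \<le> nrm x + nrm y)"

definition grad :: "('a::real_inner \<Rightarrow> real) \<Rightarrow> 'a \<Rightarrow> 'a" where
  "grad f x = (SOME D. (f has_derivative (\<lambda>v. D \<bullet> v)) (at x))"

definition L_smooth_wrt :: "('a::real_inner \<Rightarrow> real) \<Rightarrow> real \<Rightarrow> ('a \<Rightarrow> real) \<Rightarrow> bool" where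
  "L_smooth_wrt nrm L f \<longleftrightarrow>
     (\<forall>x. \<exists>D. (f has_derivative (\<lambda>v. D \<bullet> v)) (at x)) \<and>
     (\<forall>x y. f y \<le> f x + grad f x \<bullet> (y - x) + L / 2 * (nrm (y - x))\<^sup>2)"

definition moreau :: "('a::real_vector \<Rightarrow> real) \<Rightarrow> ('a \<Rightarrow> real) \<Rightarrow> real \<Rightarrow> 'a \<Rightarrow> real" where
  "moreau nrm nrms \<xi> w =
     Inf ((\<lambda>u. (nrm u)\<^sup>2 / 2 + (nrms (w - u))\<^sup>2 / (2 * \<xi>)) ` UNIV)"

definition norm_m :: "('a::real_vector \<Rightarrow> real) \<Rightarrow> ('a \<Rightarrow> real) \<Rightarrow> real \<Rightarrow> 'a \<Rightarrow> real" where
  "norm_m nrm nrms \<xi> w = sqrt (2 * moreau nrm nrms \<xi> w)"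

end

theory Submission imports Defs begin


lemma isn:
  assumes "is_norm n"
  shows isn_nonneg: "0 \<le> n x" and isn_zero: "n x = 0 \<longleftrightarrow> x = 0"
    and isn_scale: "n (c *\<^sub>R x) = \<bar>c\<bar> * n x" and isn_tri: "n (x + y) \<le> n x + n y"
  using assms unfolding is_norm_def by auto

lemma isn_minus: assumes "is_norm n" shows "n (- x) = n x"
  using isn_scale[OF assms, of "-1" x] by simp

lemma isn_0: assumes "is_norm n" shows "n 0 = 0"
  using isn_zero[OF assms] by simp

lemma isn_diff_tri: assumes "is_norm n" shows "n (x - y) \<le> n x + n y"
  using isn_tri[OF assms, of x "-y"] isn_minus[OF assms, of y] by simp

lemma isn_rev: assumes "is_norm n" shows "n x - n y \<le> n (x - y)"
  using isn_tri[OF assms, of "x - y" y] by simp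

lemma isn_sum: assumes "is_norm n" "finite S" shows "n (\<Sum>i\<in>S. f i) \<le> (\<Sum>i\<in>S. n (f i))"
  using assms(2)
proof (induction S rule: finite_induct)
  case empty then show ?case using isn_0[OF assms(1)] by simp
next
  case (insert a S)
  then show ?case using isn_tri[OF assms(1), of "f a" "sum f S"] by simp
qed

lemma isn_upper:
  fixes n :: "'a::euclidean_space \<Rightarrow> real"
  assumes "is_norm n"
  shows "\<exists>B>0. \<forall>x. n x \<le> B * norm x"
proof -
  define B where "B = 1 + (\<Sum>b\<in>Basis. n b)"
  have sp: "(\<Sum>b\<in>Basis. n b) \<ge> 0" by (rule sum_nonneg) (simp add: isn_nonneg[OF assms])
  have "n x \<le> B * norm x" for x
  proof -
    have "n x = n (\<Sum>b\<in>Basis. inner x b *\<^sub>R b)" by (simp add: euclidean_representation)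
    also have "\<dots> \<le> (\<Sum>b\<in>Basis. n (inner x b *\<^sub>R b))" by (rule isn_sum[OF assms]) simp
    also have "\<dots> = (\<Sum>b\<in>Basis. \<bar>inner x b\<bar> * n b)" by (simp add: isn_scale[OF assms])
    also have "\<dots> \<le> (\<Sum>b\<in>Basis. norm x * n b)"
      by (rule sum_mono, rule mult_right_mono) (auto simp: Basis_le_norm isn_nonneg[OF assms])
    also have "\<dots> = norm x * (\<Sum>b\<in>Basis. n b)" by (simp add: sum_distrib_left)
    also have "\<dots> \<le> B * norm x" unfolding B_def by (simp add: algebra_simps)
    finally show ?thesis .
  qed
  moreover have "B > 0" using sp unfolding B_def by simp
  ultimately show ?thesis by blast
qed

lemma isn_cont:
  fixes n :: "'a::euclidean_space \<Rightarrow> real"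
  assumes "is_norm n"
  shows "continuous_on S n"
proof -
  obtain B where B: "B > 0" "\<And>x. n x \<le> B * norm x" using isn_upper[OF assms] by blast
  have "B-lipschitz_on S n"
  proof (rule lipschitz_onI)
    fix x y
    have "n x - n y \<le> B * norm (x - y)" using isn_rev[OF assms, of x y] B(2)[of "x - y"] by simp
    moreover have "n y - n x \<le> B * norm (x - y)"
      using isn_rev[OF assms, of y x] B(2)[of "y - x"] by (simp add: norm_minus_commute)
    ultimately show "dist (n x) (n y) \<le> B * dist x y" by (simp add: dist_real_def dist_norm abs_le_iff)
  qed (use B in simp)
  then show ?thesis by (rule lipschitz_on_continuous_on)
qed

lemma isn_lower:
  fixes n :: "'a::euclidean_space \<Rightarrow> real"
  assumes "is_norm n"
  shows "\<exists>c>0. \<forall>x. c * norm x \<le> n x"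
proof -
  obtain b :: 'a where b: "b \<in> Basis" using nonempty_Basis by blast
  have "sphere 0 1 \<noteq> ({} :: 'a set)" using b by (auto simp: sphere_def intro!: exI[of _ b])
  then obtain x0 :: 'a where x0: "x0 \<in> sphere 0 1" "\<And>y. y \<in> sphere 0 1 \<Longrightarrow> n x0 \<le> n y"
    using continuous_attains_inf[OF compact_sphere _ isn_cont[OF assms]] by blast
  have c: "n x0 > 0" using x0(1) isn_zero[OF assms, of x0] isn_nonneg[OF assms, of x0] by auto
  have "n x0 * norm x \<le> n x" for x
  proof (cases "x = 0")
    case True then show ?thesis using isn_0[OF assms] by simp
  next
    case False
    then have "(1 / norm x) *\<^sub>R x \<in> sphere 0 1" by simp
    then have "n x0 \<le> n ((1 / norm x) *\<^sub>R x)" by (rule x0(2))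
    also have "\<dots> = n x / norm x" by (simp add: isn_scale[OF assms])
    finally show ?thesis using False by (simp add: field_simps)
  qed
  then show ?thesis using c by blast
qed

lemma half_sq:
  assumes "is_norm n"
  shows "(n ((1/2) *\<^sub>R (a + b)))\<^sup>2 \<le> ((n a)\<^sup>2 + (n b)\<^sup>2) / 2"
proof -
  have "n ((1/2) *\<^sub>R (a + b)) \<le> (n a + n b) / 2"
    using isn_tri[OF assms, of a b] by (simp add: isn_scale[OF assms])
  then have "(n ((1/2) *\<^sub>R (a + b)))\<^sup>2 \<le> ((n a + n b) / 2)\<^sup>2"
    by (rule power_mono) (simp add: isn_nonneg[OF assms])
  also have "\<dots> \<le> ((n a)\<^sup>2 + (n b)\<^sup>2) / 2"
    using sum_squares_ge_zero[of "n a - n b" 0] by (simp add: power2_eq_square field_simps)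
  finally show ?thesis .
qed

lemma pos_slack: fixes d e K :: real assumes "\<And>t. t > 0 \<Longrightarrow> d \<le> e + t * K" shows "d \<le> e"
proof (rule ccontr)
  assume "\<not> d \<le> e"
  show False
  proof (cases "K > 0")
    case True
    have "d \<le> e + ((d - e) / (2 * K)) * K" using assms[of "(d - e) / (2 * K)"] True \<open>\<not> d \<le> e\<close> by simp
    moreover have "((d - e) / (2 * K)) * K = (d - e) / 2" using True by simp
    ultimately have "2 * d \<le> 2 * e + (d - e)" by simp
    then show False using \<open>\<not> d \<le> e\<close> by linarith
  next
    case False
    then show False using assms[of 1] \<open>\<not> d \<le> e\<close> by simp
  qed
qed

lemma mink2: fixes p q r s :: real
  shows "(p + r)\<^sup>2 + (q + s)\<^sup>2 \<le> (sqrt (p\<^sup>2 + q\<^sup>2) + sqrt (r\<^sup>2 + s\<^sup>2))\<^sup>2"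
proof -
  have "p * r + q * s \<le> sqrt ((p\<^sup>2 + q\<^sup>2) * (r\<^sup>2 + s\<^sup>2))"
    by (rule real_le_rsqrt) (use sum_squares_ge_zero[of "p * s - q * r" 0] in \<open>simp add: power2_eq_square algebra_simps\<close>)
  then have cs: "p * r + q * s \<le> sqrt (p\<^sup>2 + q\<^sup>2) * sqrt (r\<^sup>2 + s\<^sup>2)" by (simp add: real_sqrt_mult)
  have e1: "(sqrt (p\<^sup>2 + q\<^sup>2))\<^sup>2 = p\<^sup>2 + q\<^sup>2" by simp
  have e2: "(sqrt (r\<^sup>2 + s\<^sup>2))\<^sup>2 = r\<^sup>2 + s\<^sup>2" by simp
  have "(sqrt (p\<^sup>2 + q\<^sup>2) + sqrt (r\<^sup>2 + s\<^sup>2))\<^sup>2 = (sqrt (p\<^sup>2 + q\<^sup>2))\<^sup>2 + (sqrt (r\<^sup>2 + s\<^sup>2))\<^sup>2 + 2 * (sqrt (p\<^sup>2 + q\<^sup>2) * sqrt (r\<^sup>2 + s\<^sup>2))"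
    by (simp add: power2_eq_square algebra_simps)
  also have "\<dots> = p\<^sup>2 + q\<^sup>2 + r\<^sup>2 + s\<^sup>2 + 2 * (sqrt (p\<^sup>2 + q\<^sup>2) * sqrt (r\<^sup>2 + s\<^sup>2))" using e1 e2 by simp
  finally show ?thesis using cs by (simp add: power2_eq_square algebra_simps)
qed

lemma quad_deriv:
  fixes F :: "'a::euclidean_space \<Rightarrow> real"
  assumes "\<And>v. \<bar>F (x + v) - F x - D \<bullet> v\<bar> \<le> C * (norm v)\<^sup>2"
  shows "(F has_derivative (\<lambda>v. D \<bullet> v)) (at x)"
  unfolding has_derivative_at_alt
proof (intro conjI allI impI)
  show "bounded_linear ((\<bullet>) D)" by (rule bounded_linear_inner_right)
  fix e :: real assume e: "e > 0"
  define d where "d = e / (\<bar>C\<bar> + 1)"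
  have d: "d > 0" using e by (simp add: d_def)
  have "norm (F y - F x - D \<bullet> (y - x)) \<le> e * norm (y - x)" if "norm (y - x) < d" for y
  proof -
    have "norm (F y - F x - D \<bullet> (y - x)) \<le> C * (norm (y - x))\<^sup>2"
      using assms[of "y - x"] by simp
    also have "\<dots> \<le> \<bar>C\<bar> * (norm (y - x) * norm (y - x))" unfolding power2_eq_square by (intro mult_right_mono) auto
    also have "\<dots> \<le> \<bar>C\<bar> * (d * norm (y - x))"
      using that by (intro mult_left_mono mult_right_mono) auto
    also have "\<dots> \<le> e * norm (y - x)"
    proof -
      have "\<bar>C\<bar> * (d * norm (y - x)) = (\<bar>C\<bar> / (\<bar>C\<bar> + 1)) * (e * norm (y - x))"
        unfolding d_def by (simp add: field_simps)
      also have "\<dots> \<le> e * norm (y - x)"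
        by (rule mult_left_le_one_le) (use e in auto)
      finally show ?thesis .
    qed
    finally show ?thesis .
  qed
  then show "\<exists>d>0. \<forall>y. norm (y - x) < d \<longrightarrow> norm (F y - F x - D \<bullet> (y - x)) \<le> e * norm (y - x)"
    using d by blast
qed

lemma grad_eq:
  fixes F :: "'a::euclidean_space \<Rightarrow> real"
  assumes "(F has_derivative (\<lambda>v. D \<bullet> v)) (at x)"
  shows "grad F x = D"
proof -
  have "(F has_derivative (\<lambda>v. grad F x \<bullet> v)) (at x)"
    unfolding grad_def by (rule someI[of _ D]) (rule assms)
  then have "(\<lambda>v. grad F x \<bullet> v) = (\<lambda>v. D \<bullet> v)" using assms by (rule has_derivative_unique)
  then have "(grad F x - D) \<bullet> (grad F x - D) = 0" by (metis inner_diff_left cancel_comm_monoid_add_class.diff_cancel)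
  then show ?thesis by simp
qed



locale menv =
  fixes nrm nrms :: "'a::euclidean_space \<Rightarrow> real" and \<xi> L :: real
  assumes nrm: "is_norm nrm" and nrms: "is_norm nrms" and xi: "\<xi> > 0"
    and smooth: "L_smooth_wrt nrms L (\<lambda>v. (nrms v)\<^sup>2 / 2)"
begin

definition obj where "obj w u = (nrm u)\<^sup>2 / 2 + (nrms (w - u))\<^sup>2 / (2 * \<xi>)"

abbreviation M where "M \<equiv> moreau nrm nrms \<xi>"
abbreviation F where "F w \<equiv> (norm_m nrm nrms \<xi> w)\<^sup>2"

lemma obj_nonneg: "0 \<le> obj w u"
  unfolding obj_def using xi by simp

lemma M_def': "M w = Inf (range (obj w))"
  unfolding moreau_def obj_def by simp

lemma M_le: "M w \<le> obj w u"
  unfolding M_def' by (rule cInf_lower) (auto intro: bdd_belowI[of _ 0] simp: obj_nonneg)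

lemma M_ge: assumes "\<And>u. c \<le> obj w u" shows "c \<le> M w"
  unfolding M_def' by (rule cInf_greatest) (use assms in auto)

lemma M_nonneg: "0 \<le> M w" by (rule M_ge) (rule obj_nonneg)

lemma F_eq: "F w = 2 * M w"
  unfolding norm_m_def using M_nonneg[of w] by simp

lemma obj_cont: "continuous_on S (obj w)"
  unfolding obj_def
  by (intro continuous_intros continuous_on_compose2[OF isn_cont[OF nrm, of UNIV]]
        continuous_on_compose2[OF isn_cont[OF nrms, of UNIV]]) (use xi in auto)

lemma minimizer: "\<exists>u0. M w = obj w u0"
proof -
  obtain c where c: "c > 0" "\<And>x. c * norm x \<le> nrm x" using isn_lower[OF nrm] by blast
  define A where "A = obj w 0"
  define R where "R = sqrt (2 * A) / c"
  have A0: "A \<ge> 0" unfolding A_def by (rule obj_nonneg)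
  have R0: "R \<ge> 0" unfolding R_def by (intro divide_nonneg_pos real_sqrt_ge_zero) (use A0 c in auto)
  obtain u0 where u0: "u0 \<in> cball 0 R" "\<And>y. y \<in> cball 0 R \<Longrightarrow> obj w u0 \<le> obj w y"
    using continuous_attains_inf[OF compact_cball _ obj_cont, of 0 R w] R0 by auto
  have "obj w u0 \<le> obj w u" for u
  proof (cases "u \<in> cball 0 R")
    case True then show ?thesis by (rule u0(2))
  next
    case False
    then have "norm u > R" by simp
    then have "c * R < c * norm u" using c by simp
    also have "\<dots> \<le> nrm u" by (rule c)
    finally have "sqrt (2 * A) < nrm u" unfolding R_def using c by simp
    then have "(sqrt (2 * A))\<^sup>2 < (nrm u)\<^sup>2" by (rule power_strict_mono) (use A0 in auto)
    then have "2 * A < (nrm u)\<^sup>2" using A0 by simp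
    moreover have "0 \<le> (nrms (w - u))\<^sup>2 / (2 * \<xi>)" using xi by simp
    ultimately have "A < obj w u" unfolding obj_def by linarith
    moreover have "obj w u0 \<le> A" unfolding A_def by (rule u0(2)) (use R0 in simp)
    ultimately show ?thesis by simp
  qed
  then have "M w = obj w u0" using M_le[of w u0] M_ge[of "obj w u0" w] by (simp add: antisym)
  then show ?thesis by blast
qed

lemma midpoint: "2 * M x \<le> M (x + v) + M (x - v)"
proof -
  obtain u1 where u1: "M (x + v) = obj (x + v) u1" using minimizer by blast
  obtain u2 where u2: "M (x - v) = obj (x - v) u2" using minimizer by blast
  have h: "(1/2) *\<^sub>R x + (1/2) *\<^sub>R x = x" by (simp flip: scaleR_add_left)
  have e: "x - (1/2) *\<^sub>R (u1 + u2) = (1/2) *\<^sub>R ((x + v - u1) + (x - v - u2))"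
    using h by (simp add: algebra_simps)
  have "M x \<le> obj x ((1/2) *\<^sub>R (u1 + u2))" by (rule M_le)
  also have "\<dots> \<le> ((nrm u1)\<^sup>2 + (nrm u2)\<^sup>2) / 2 / 2 + ((nrms (x + v - u1))\<^sup>2 + (nrms (x - v - u2))\<^sup>2) / 2 / (2 * \<xi>)"
    unfolding obj_def e using half_sq[OF nrm, of u1 u2] half_sq[OF nrms, of "x + v - u1" "x - v - u2"] xi
    by (intro add_mono divide_right_mono) auto
  also have "\<dots> = (obj (x + v) u1 + obj (x - v) u2) / 2" unfolding obj_def using xi by (simp add: field_simps)
  finally show ?thesis using u1 u2 by simp
qed

lemma grad_phi: "(\<lambda>y. (nrms y)\<^sup>2 / 2) y \<le> (\<lambda>y. (nrms y)\<^sup>2 / 2) z + grad (\<lambda>v. (nrms v)\<^sup>2 / 2) z \<bullet> (y - z) + L / 2 * (nrms (y - z))\<^sup>2"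
  using smooth unfolding L_smooth_wrt_def by blast

lemma quad: "\<exists>D C. \<forall>v. \<bar>F (x + v) - F x - D \<bullet> v\<bar> \<le> C * (norm v)\<^sup>2"
proof -
  obtain B where B: "B > 0" "\<And>x. nrms x \<le> B * norm x" using isn_upper[OF nrms] by blast
  obtain u0 where u0: "M x = obj x u0" using minimizer by blast
  define g where "g = grad (\<lambda>v. (nrms v)\<^sup>2 / 2) (x - u0)"
  have up: "M (x + v) \<le> M x + (g \<bullet> v) / \<xi> + L / (2 * \<xi>) * (nrms v)\<^sup>2" for v
  proof -
    have "M (x + v) \<le> obj (x + v) u0" by (rule M_le)
    also have "\<dots> = (nrm u0)\<^sup>2 / 2 + ((nrms (x + v - u0))\<^sup>2 / 2) / \<xi>" unfolding obj_def by simp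
    also have "\<dots> \<le> (nrm u0)\<^sup>2 / 2 + ((nrms (x - u0))\<^sup>2 / 2 + g \<bullet> v + L / 2 * (nrms v)\<^sup>2) / \<xi>"
      using grad_phi[of "x + v - u0" "x - u0"] xi unfolding g_def
      by (intro add_left_mono divide_right_mono) (auto simp: algebra_simps)
    also have "\<dots> = M x + (g \<bullet> v) / \<xi> + L / (2 * \<xi>) * (nrms v)\<^sup>2"
      unfolding u0 obj_def using xi by (simp add: field_simps)
    finally show ?thesis .
  qed
  have nb: "L / (2 * \<xi>) * (nrms v)\<^sup>2 \<le> (\<bar>L\<bar> * B\<^sup>2 / (2 * \<xi>)) * (norm v)\<^sup>2" for v
  proof -
    have "L / (2 * \<xi>) * (nrms v)\<^sup>2 \<le> \<bar>L\<bar> / (2 * \<xi>) * (nrms v)\<^sup>2"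
      using xi by (intro mult_right_mono divide_right_mono) auto
    also have "\<dots> \<le> \<bar>L\<bar> / (2 * \<xi>) * (B * norm v)\<^sup>2"
      using xi B(2)[of v] isn_nonneg[OF nrms, of v] by (intro mult_left_mono power_mono) auto
    finally show ?thesis by (simp add: power_mult_distrib)
  qed
  define C where "C = \<bar>L\<bar> * B\<^sup>2 / \<xi>"
  have "\<bar>F (x + v) - F x - ((2 / \<xi>) *\<^sub>R g) \<bullet> v\<bar> \<le> C * (norm v)\<^sup>2" for v
  proof -
    have a: "M (x + v) - M x - (g \<bullet> v) / \<xi> \<le> (\<bar>L\<bar> * B\<^sup>2 / (2 * \<xi>)) * (norm v)\<^sup>2"
      using up[of v] nb[of v] by simp
    have "M (x - v) \<le> M x - (g \<bullet> v) / \<xi> + L / (2 * \<xi>) * (nrms v)\<^sup>2"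
      using up[of "- v"] isn_minus[OF nrms, of v] by simp
    then have b: "-(\<bar>L\<bar> * B\<^sup>2 / (2 * \<xi>)) * (norm v)\<^sup>2 \<le> M (x + v) - M x - (g \<bullet> v) / \<xi>"
      using midpoint[of x v] nb[of v] by simp
    have "F (x + v) - F x - ((2 / \<xi>) *\<^sub>R g) \<bullet> v = 2 * (M (x + v) - M x - (g \<bullet> v) / \<xi>)"
      unfolding F_eq by (simp add: algebra_simps)
    then show ?thesis using a b unfolding C_def by (simp add: abs_le_iff)
  qed
  then show ?thesis by blast
qed

lemma F_deriv: "\<exists>D C. (F has_derivative (\<lambda>v. D \<bullet> v)) (at x) \<and> (\<forall>v. \<bar>F (x + v) - F x - D \<bullet> v\<bar> \<le> C * (norm v)\<^sup>2)"
proof -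
  obtain D C where "\<forall>v. \<bar>F (x + v) - F x - D \<bullet> v\<bar> \<le> C * (norm v)\<^sup>2" using quad[of x] by blast
  then show ?thesis using quad_deriv[of F x D C] by blast
qed

lemma M_hom: "M (c *\<^sub>R x) = c\<^sup>2 * M x"
proof -
  obtain u0 where u0: "M x = obj x u0" using minimizer by blast
  obtain u1 where u1: "M (c *\<^sub>R x) = obj (c *\<^sub>R x) u1" using minimizer by blast
  have objs: "obj (c *\<^sub>R x) (c *\<^sub>R u) = c\<^sup>2 * obj x u" for u
  proof -
    have e: "c *\<^sub>R x - c *\<^sub>R u = c *\<^sub>R (x - u)" by (simp add: algebra_simps)
    have "nrms (c *\<^sub>R x - c *\<^sub>R u) = \<bar>c\<bar> * nrms (x - u)" unfolding e by (rule isn_scale[OF nrms])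
    then show ?thesis unfolding obj_def
      by (simp add: isn_scale[OF nrm] isn_scale[OF nrms] power_mult_distrib field_simps)
  qed
  have le: "M (c *\<^sub>R x) \<le> c\<^sup>2 * M x" using M_le[of "c *\<^sub>R x" "c *\<^sub>R u0"] objs u0 by simp
  show ?thesis
  proof (cases "c = 0")
    case True
    then show ?thesis using le M_nonneg[of "c *\<^sub>R x"] by simp
  next
    case False
    have "M x \<le> obj x ((1/c) *\<^sub>R u1)" by (rule M_le)
    also have "c\<^sup>2 * obj x ((1/c) *\<^sub>R u1) = obj (c *\<^sub>R x) u1"
      using objs[of "(1/c) *\<^sub>R u1"] False by simp
    ultimately have "c\<^sup>2 * M x \<le> M (c *\<^sub>R x)" using u1 mult_left_mono[of "M x" "obj x ((1/c) *\<^sub>R u1)" "c\<^sup>2"] by simp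
    then show ?thesis using le by simp
  qed
qed

lemma F_hom: "F (c *\<^sub>R x) = c\<^sup>2 * F x"
  unfolding F_eq M_hom by simp

lemma nm_hom: "norm_m nrm nrms \<xi> (c *\<^sub>R x) = \<bar>c\<bar> * norm_m nrm nrms \<xi> x"
  unfolding norm_m_def M_hom by (simp add: real_sqrt_mult)

lemma nm_nonneg: "0 \<le> norm_m nrm nrms \<xi> x"
  unfolding norm_m_def using M_nonneg[of x] by simp

lemma nm_F: "(norm_m nrm nrms \<xi> x) = sqrt (F x)"
  using nm_nonneg[of x] by simp

lemma nm_tri: "norm_m nrm nrms \<xi> (x + y) \<le> norm_m nrm nrms \<xi> x + norm_m nrm nrms \<xi> y"
proof -
  obtain u1 where u1: "M x = obj x u1" using minimizer by blast
  obtain u2 where u2: "M y = obj y u2" using minimizer by blast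
  define p where "p = nrm u1"
  define r where "r = nrm u2"
  define q where "q = nrms (x - u1) / sqrt \<xi>"
  define s where "s = nrms (y - u2) / sqrt \<xi>"
  have Fx: "F x = p\<^sup>2 + q\<^sup>2" unfolding F_eq u1 obj_def p_def q_def using xi
    by (simp add: power_divide)
  have Fy: "F y = r\<^sup>2 + s\<^sup>2" unfolding F_eq u2 obj_def r_def s_def using xi
    by (simp add: power_divide)
  have e: "x + y - (u1 + u2) = (x - u1) + (y - u2)" by (simp add: algebra_simps)
  have "F (x + y) \<le> 2 * obj (x + y) (u1 + u2)" unfolding F_eq using M_le by simp
  also have "\<dots> = (nrm (u1 + u2))\<^sup>2 + (nrms ((x - u1) + (y - u2)) / sqrt \<xi>)\<^sup>2"
    unfolding obj_def e using xi by (simp add: power_divide)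
  also have "\<dots> \<le> (p + r)\<^sup>2 + (q + s)\<^sup>2"
    unfolding p_def r_def q_def s_def using xi
    by (intro add_mono power_mono divide_right_mono)
       (auto simp: isn_tri[OF nrm] isn_nonneg[OF nrm] isn_nonneg[OF nrms] add_divide_distrib[symmetric]
         intro: divide_right_mono isn_tri[OF nrms])
  also have "\<dots> \<le> (sqrt (F x) + sqrt (F y))\<^sup>2" unfolding Fx Fy by (rule mink2)
  finally have "sqrt (F (x + y)) \<le> sqrt ((sqrt (F x) + sqrt (F y))\<^sup>2)" by (rule real_sqrt_le_mono)
  then show ?thesis using nm_nonneg[of x] nm_nonneg[of y] nm_nonneg[of "x + y"] by simp
qed


lemma nm_upper:
  assumes uc: "\<forall>v. nrm v \<le> uc * nrms v" "uc > 0"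
  shows "nrm y \<le> sqrt (1 + \<xi> * uc\<^sup>2) * norm_m nrm nrms \<xi> y"
proof -
  obtain u0 where u0: "M y = obj y u0" using minimizer by blast
  define p where "p = nrm u0"
  define q where "q = nrms (y - u0)"
  have Fy: "F y = p\<^sup>2 + q\<^sup>2 / \<xi>" unfolding F_eq u0 obj_def p_def q_def using xi by simp
  have "nrm y = nrm (u0 + (y - u0))" by simp
  also have "\<dots> \<le> p + nrm (y - u0)" unfolding p_def by (rule isn_tri[OF nrm])
  also have "\<dots> \<le> p + uc * q" unfolding q_def using uc by simp
  finally have n1: "nrm y \<le> p + uc * q" .
  have "(p + uc * q)\<^sup>2 \<le> (1 + \<xi> * uc\<^sup>2) * (p\<^sup>2 + q\<^sup>2 / \<xi>)"
  proof -
    have "\<xi> * ((1 + \<xi> * uc\<^sup>2) * (p\<^sup>2 + q\<^sup>2 / \<xi>) - (p + uc * q)\<^sup>2) = (q - \<xi> * uc * p)\<^sup>2"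
      using xi by (simp add: field_simps power2_eq_square)
    then have "0 \<le> \<xi> * ((1 + \<xi> * uc\<^sup>2) * (p\<^sup>2 + q\<^sup>2 / \<xi>) - (p + uc * q)\<^sup>2)" by simp
    then show ?thesis using xi by (simp add: zero_le_mult_iff)
  qed
  then have "p + uc * q \<le> sqrt ((1 + \<xi> * uc\<^sup>2) * F y)" unfolding Fy by (rule real_le_rsqrt)
  also have "\<dots> = sqrt (1 + \<xi> * uc\<^sup>2) * norm_m nrm nrms \<xi> y"
    using nm_nonneg[of y] by (simp add: real_sqrt_mult)
  finally show ?thesis using n1 by simp
qed

lemma nm_lower:
  assumes lc: "\<forall>v. lc * nrms v \<le> nrm v" "lc > 0"
  shows "sqrt (1 + \<xi> * lc\<^sup>2) * norm_m nrm nrms \<xi> y \<le> nrm y"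
proof -
  define k where "k = \<xi> * lc\<^sup>2"
  have k: "k > 0" unfolding k_def using xi lc by simp
  define s where "s = 1 / (1 + k)"
  define N where "N = nrm y"
  have N0: "N \<ge> 0" unfolding N_def by (rule isn_nonneg[OF nrm])
  have ny: "nrms y \<le> N / lc" unfolding N_def using lc by (simp add: field_simps mult.commute)
  have ey: "y - s *\<^sub>R y = (1 - s) *\<^sub>R y" by (simp add: algebra_simps)
  have s1: "0 \<le> 1 - s" unfolding s_def using k by simp
  have "F y \<le> 2 * obj y (s *\<^sub>R y)" unfolding F_eq using M_le by simp
  also have "\<dots> = s\<^sup>2 * N\<^sup>2 + (1 - s)\<^sup>2 * (nrms y)\<^sup>2 / \<xi>"
    unfolding obj_def ey N_def using s1 xi
    by (simp add: isn_scale[OF nrm] isn_scale[OF nrms] power_mult_distrib)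
  also have "\<dots> \<le> s\<^sup>2 * N\<^sup>2 + (1 - s)\<^sup>2 * (N / lc)\<^sup>2 / \<xi>"
    using ny xi isn_nonneg[OF nrms, of y]
    by (intro add_left_mono divide_right_mono mult_left_mono power_mono) auto
  also have "\<dots> = s\<^sup>2 * N\<^sup>2 + (1 - s)\<^sup>2 * (N\<^sup>2 / k)"
    unfolding k_def using xi lc by (simp add: field_simps power2_eq_square)
  also have "\<dots> = N\<^sup>2 / (1 + k)"
  proof -
    have e1: "1 - s = k / (1 + k)" unfolding s_def using k by (simp add: field_simps)
    have "(1/(1+k))\<^sup>2 * N\<^sup>2 + (k/(1+k))\<^sup>2 * (N\<^sup>2 / k) = N\<^sup>2 * (1 + k) / (1+k)\<^sup>2"
      using k by (simp add: power_divide field_simps power2_eq_square add_divide_distrib)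
    also have "\<dots> = N\<^sup>2 / (1 + k)" using k by (simp add: power2_eq_square)
    finally show ?thesis unfolding e1 unfolding s_def .
  qed
  finally have "(1 + k) * F y \<le> N\<^sup>2" using k by (simp add: field_simps)
  then have "sqrt ((1 + k) * F y) \<le> sqrt (N\<^sup>2)" by (rule real_sqrt_le_mono)
  then show ?thesis using N0 nm_nonneg[of y] k unfolding k_def N_def by (simp add: real_sqrt_mult)
qed

end


theorem lemma4:
  fixes nrm nrms :: "real ^ 'd \<Rightarrow> real"
    and h :: "real ^ 'd \<Rightarrow> real ^ 'd"
    and \<kappa> \<xi> L l_cs u_cs :: real
    and wstar w :: "real ^ 'd"
  assumes nrm: "is_norm nrm"
    and nrms: "is_norm nrms"
    and smooth: "L_smooth_wrt nrms L (\<lambda>v. (nrms v)\<^sup>2 / 2)"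
    and xi: "\<xi> > 0"
    and kappa: "0 \<le> \<kappa>" "\<kappa> < 1"
    and contr: "\<forall>v v'. nrm (h v - h v') \<le> \<kappa> * nrm (v - v')"
    and fixpt: "h wstar = wstar"
    and cs: "l_cs > 0" "u_cs > 0" "\<forall>v. l_cs * nrms v \<le> nrm v \<and> nrm v \<le> u_cs * nrms v"
  shows "grad (\<lambda>v. (norm_m nrm nrms \<xi> v)\<^sup>2) (w - wstar) \<bullet> (h w - w)
           \<le> - 2 * (1 - (sqrt (1 + \<xi> * u_cs\<^sup>2) / sqrt (1 + \<xi> * l_cs\<^sup>2)) * \<kappa>)
               * (norm_m nrm nrms \<xi> (w - wstar))\<^sup>2"
proof -
  interpret menv nrm nrms \<xi> L using nrm nrms xi smooth by unfold_locales
  define x where "x = w - wstar"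
  define y where "y = h w - wstar"
  define a where "a = norm_m nrm nrms \<xi> x"
  define b where "b = norm_m nrm nrms \<xi> y"
  define lm where "lm = sqrt (1 + \<xi> * l_cs\<^sup>2)"
  define um where "um = sqrt (1 + \<xi> * u_cs\<^sup>2)"
  have a0: "a \<ge> 0" unfolding a_def by (rule nm_nonneg)
  have b0: "b \<ge> 0" unfolding b_def by (rule nm_nonneg)
  have lm0: "lm > 0" unfolding lm_def using xi by (simp add: add_pos_nonneg)
  obtain D C where D: "(F has_derivative (\<lambda>v. D \<bullet> v)) (at x)"
    and DC: "\<And>v. \<bar>F (x + v) - F x - D \<bullet> v\<bar> \<le> C * (norm v)\<^sup>2"
    using F_deriv[of x] by blast
  have G: "grad (\<lambda>v. (norm_m nrm nrms \<xi> v)\<^sup>2) x = D" using D by (rule grad_eq)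
  have Dy: "D \<bullet> y \<le> 2 * a * b"
  proof (rule pos_slack[where K = "b\<^sup>2 + C * (norm y)\<^sup>2"])
    fix t :: real assume t: "t > 0"
    have "norm_m nrm nrms \<xi> (x + t *\<^sub>R y) \<le> a + t * b"
      using nm_tri[of x "t *\<^sub>R y"] nm_hom[of t y] t unfolding a_def b_def by simp
    then have Fu: "F (x + t *\<^sub>R y) \<le> (a + t * b)\<^sup>2"
      by (rule power_mono) (rule nm_nonneg)
    have "F (x + t *\<^sub>R y) - F x - D \<bullet> (t *\<^sub>R y) \<ge> - (C * (norm (t *\<^sub>R y))\<^sup>2)"
      using DC[of "t *\<^sub>R y"] by (simp add: abs_le_iff)
    then have "t * (D \<bullet> y) \<le> (a + t * b)\<^sup>2 - a\<^sup>2 + C * t\<^sup>2 * (norm y)\<^sup>2"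
      using Fu t unfolding a_def by (simp add: power_mult_distrib)
    also have "\<dots> = t * (2 * a * b + t * (b\<^sup>2 + C * (norm y)\<^sup>2))"
      by (simp add: power2_eq_square algebra_simps)
    finally show "D \<bullet> y \<le> 2 * a * b + t * (b\<^sup>2 + C * (norm y)\<^sup>2)" using t by simp
  qed
  have Dx: "2 * a\<^sup>2 \<le> D \<bullet> x"
  proof (rule pos_slack[where K = "C * (norm x)\<^sup>2 - a\<^sup>2"])
    fix t :: real assume t: "t > 0"
    have Fe: "F (x + t *\<^sub>R x) = (1 + t)\<^sup>2 * a\<^sup>2"
      using F_hom[of "1 + t" x] unfolding a_def by (simp add: algebra_simps)
    have "F (x + t *\<^sub>R x) - F x - D \<bullet> (t *\<^sub>R x) \<le> C * (norm (t *\<^sub>R x))\<^sup>2"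
      using DC[of "t *\<^sub>R x"] by (simp add: abs_le_iff)
    then have "(1 + t)\<^sup>2 * a\<^sup>2 - a\<^sup>2 - t * (D \<bullet> x) \<le> C * t\<^sup>2 * (norm x)\<^sup>2"
      using Fe t unfolding a_def by (simp add: power_mult_distrib)
    then have "t * (2 * a\<^sup>2) \<le> t * (D \<bullet> x + t * (C * (norm x)\<^sup>2 - a\<^sup>2))"
      by (simp add: power2_eq_square algebra_simps)
    then show "2 * a\<^sup>2 \<le> D \<bullet> x + t * (C * (norm x)\<^sup>2 - a\<^sup>2)" using t by simp
  qed
  have ny: "lm * b \<le> nrm y" unfolding lm_def b_def
    by (rule nm_lower) (use cs in auto)
  have nx: "nrm x \<le> um * a" unfolding um_def a_def
    by (rule nm_upper) (use cs in auto)
  have "nrm y \<le> \<kappa> * nrm x" unfolding y_def x_def using contr fixpt by metis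
  also have "\<dots> \<le> \<kappa> * (um * a)" using nx kappa by (simp add: mult_left_mono)
  finally have "lm * b \<le> \<kappa> * um * a" using ny by simp
  then have bb: "b \<le> (um / lm) * \<kappa> * a" using lm0 by (simp add: field_simps)
  have hw: "h w - w = y - x" unfolding x_def y_def by simp
  have "D \<bullet> (h w - w) = D \<bullet> y - D \<bullet> x" unfolding hw by (simp add: inner_diff_right)
  also have "\<dots> \<le> 2 * a * b - 2 * a\<^sup>2" using Dx Dy by simp
  also have "\<dots> \<le> 2 * a * ((um / lm) * \<kappa> * a) - 2 * a\<^sup>2"
    using mult_left_mono[OF bb, of "2 * a"] a0 by simp
  also have "\<dots> = - 2 * (1 - (um / lm) * \<kappa>) * a\<^sup>2" by (simp add: power2_eq_square algebra_simps)
  finally show ?thesis unfolding G[unfolded x_def] a_def x_def um_def lm_def by (simp add: G[unfolded x_def])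
qed

end
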